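(* Let $p$ be a prime number. Define integers $x_0,\ldots,x_{4p-1}$ by $x_k=kp+\left(\tfrac{k(k+1)}{2}\bmod p\right)$ and $x_{k+2p}=x_k+p$ for $k=0,\ldots,2p-1$. Then $\{x_i-x_j\mid i,j=0,\ldots,4p-1\}\supseteq\{x\in\mathbb{Z}\mid |x|<p^2\}$.
   Context: $a\bmod p$ denotes the remainder of $a$ in $\{0,\ldots,p-1\}$. *)

theory Defs
  imports "HOL-Computational_Algebra.Primes"
begin

definition xseq :: "int \<Rightarrow> nat \<Rightarrow> int" where
  "xseq p i = (if i < 2 * nat p
      then int i * p + ((int i * (int i + 1) div 2) mod p)
      else (int (i - 2 * nat p) * p + ((int (i - 2 * nat p) * (int (i - 2 * nat p) + 1) div 2) mod p)) + p)"

end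

theory Submission
  imports Defs "HOL-Number_Theory.Cong"
begin

lemma xs_lo: "i < 2 * nat p \<Longrightarrow> xseq p i = int i * p + ((int i * (int i + 1) div 2) mod p)"
  by (simp add: xseq_def)

lemma xs_hi: "i < 2 * nat p \<Longrightarrow> xseq p (i + 2 * nat p) = xseq p i + p"
  by (simp add: xseq_def)

lemma tri_even: "even ((n::int) * (n + 1))"
  by simp

lemma tri_add: "(l + d) * (l + d + 1) div 2 = l * (l + 1) div 2 + d * l + d * (d + 1) div 2"
  for l d :: int
proof -
  obtain u where u: "l * (l + 1) = 2 * u" using tri_even[of l] by (metis dvdE)
  obtain v where v: "d * (d + 1) = 2 * v" using tri_even[of d] by (metis dvdE)
  have "(l + d) * (l + d + 1) = l * (l + 1) + 2 * (d * l) + d * (d + 1)"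
    by (simp add: algebra_simps)
  also have "\<dots> = 2 * (u + d * l + v)" using u v by simp
  finally show ?thesis using u v by simp
qed

lemma solve_lin:
  fixes p d b :: int
  assumes "prime p" "0 < d" "d < p"
  shows "\<exists>l. 0 \<le> l \<and> l < p \<and> (d * l + c) mod p = b mod p"
proof -
  have "coprime d p"
    using assms by (metis prime_imp_coprime_int dual_order.strict_iff_not zdvd_imp_le coprime_commute)
  then obtain e where e: "(d * e) mod p = 1 mod p"
    using cong_solve_coprime_int[of d p] unfolding cong_def by blast
  define l where "l = (e * (b - c)) mod p"
  have pp: "p > 0" using assms by simp
  have "(d * l + c) mod p = (d * (e * (b - c)) + c) mod p"
    unfolding l_def by (metis mod_add_left_eq mod_mult_right_eq)
  also have "\<dots> = ((d * e) * (b - c) + c) mod p" by (simp add: mult.assoc)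
  also have "\<dots> = (1 * (b - c) + c) mod p"
    by (metis e mod_add_left_eq mod_mult_left_eq)
  finally show ?thesis using pp unfolding l_def
    by (intro exI[of _ l]) (simp add: l_def)
qed

lemma main_pos:
  fixes p x :: int
  assumes "prime p" "0 \<le> x" "x < p ^ 2"
  shows "\<exists>i j. x = xseq p i - xseq p j \<and> i < 4 * nat p \<and> j < 4 * nat p"
proof -
  have pp: "p \<ge> 2" using assms(1) prime_ge_2_int by blast
  define n where "n = nat p"
  have pn: "p = int n" using pp n_def by simp
  define a where "a = x div p"
  define b where "b = x mod p"
  have xab: "x = a * p + b" unfolding a_def b_def by simp
  have b0: "0 \<le> b" "b < p" using pp unfolding b_def by auto
  have a0: "0 \<le> a" using assms pp unfolding a_def by (simp add: div_int_pos_iff)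
  have ap: "a < p"
  proof (rule ccontr)
    assume "\<not> a < p"
    then have "p * p \<le> a * p" using pp by (simp add: mult_right_mono)
    moreover have "x < p * p" using assms(3) by (simp add: power2_eq_square)
    ultimately show False using xab b0 by linarith
  qed
  define d where "d = (if a = 0 then 1 else a)"
  have d0: "0 < d" "d < p" using a0 ap pp unfolding d_def by auto
  define T where "T = (\<lambda>m::int. m * (m + 1) div 2)"
  obtain l where l: "0 \<le> l" "l < p" "(d * l + T d) mod p = b mod p"
    using solve_lin[OF assms(1) d0] by blast
  define ln where "ln = nat l"
  define dn where "dn = nat d"
  define kn where "kn = ln + dn"
  have lnlt: "ln < 2 * n" using l pn ln_def by simp
  have knlt: "kn < 2 * n" using l d0 pn ln_def dn_def kn_def by simp
  have Tk: "T (int kn) = T (int ln) + d * int ln + T d"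
    unfolding T_def kn_def using tri_add[of "int ln" "int dn"] l d0 ln_def dn_def by simp
  define \<delta> where "\<delta> = T (int kn) mod p - T (int ln) mod p"
  have D: "xseq p kn - xseq p ln = d * p + \<delta>"
    unfolding \<delta>_def using xs_lo[of kn p] xs_lo[of ln p] knlt lnlt n_def
    by (simp add: T_def kn_def dn_def algebra_simps d0(1) less_imp_le)
  have "\<delta> mod p = (T (int kn) - T (int ln)) mod p" unfolding \<delta>_def by (simp add: mod_diff_eq)
  also have "\<dots> = b" using Tk l ln_def b0 by simp
  finally have dm: "\<delta> mod p = b" .
  have m1: "0 \<le> T (int kn) mod p" "T (int kn) mod p < p" "0 \<le> T (int ln) mod p" "T (int ln) mod p < p"
    using pp by simp_all
  have "- p < \<delta>" "\<delta> < p" unfolding \<delta>_def using m1 by linarith+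
  then have dcase: "\<delta> = b \<or> \<delta> = b - p"
  proof -
    have "\<delta> = \<delta> div p * p + b" using dm by (metis div_mult_mod_eq)
    moreover have "\<delta> div p = 0 \<or> \<delta> div p = -1"
      using \<open>- p < \<delta>\<close> \<open>\<delta> < p\<close> pp
      by (smt (verit) div_pos_neg_trivial div_pos_pos_trivial int_div_less_self
          pos_zdiv_mult_2 zdiv_mono1 zdiv_zminus1_eq_if div_minus_minus div_self)
    ultimately show ?thesis by auto
  qed
  have hk: "xseq p (kn + 2 * n) = xseq p kn + p" using xs_hi knlt n_def by simp
  have hl: "xseq p (ln + 2 * n) = xseq p ln + p" using xs_hi lnlt n_def by simp
  have k4: "kn < 4 * nat p" "kn + 2 * n < 4 * nat p" using knlt n_def by auto
  have l4: "ln < 4 * nat p" "ln + 2 * n < 4 * nat p" using lnlt n_def by auto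
  show ?thesis
  proof (cases "a = 0")
    case True
    then have "d = 1" by (simp add: d_def)
    show ?thesis
    proof (cases "\<delta> = b")
      case True
      then show ?thesis using D hl \<open>d = 1\<close> \<open>a = 0\<close> xab k4 l4
        by (intro exI[of _ kn] exI[of _ "ln + 2 * n"]) auto
    next
      case False
      then show ?thesis using dcase D \<open>d = 1\<close> \<open>a = 0\<close> xab k4 l4
        by (intro exI[of _ kn] exI[of _ "ln"]) auto
    qed
  next
    case False
    then have "d = a" by (simp add: d_def)
    show ?thesis
    proof (cases "\<delta> = b")
      case True
      then show ?thesis using D \<open>d = a\<close> xab k4 l4
        by (intro exI[of _ kn] exI[of _ ln]) auto
    next
      case False
      then show ?thesis using dcase D hk \<open>d = a\<close> xab k4 l4
        by (intro exI[of _ "kn + 2 * n"] exI[of _ "ln"]) (auto simp: algebra_simps)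
    qed
  qed
qed

theorem theorem8:
  fixes p :: int
  assumes "prime p"
  shows "{x :: int. \<bar>x\<bar> < p ^ 2} \<subseteq> {xseq p i - xseq p j | i j. i < 4 * nat p \<and> j < 4 * nat p}"
proof
  fix x :: int assume "x \<in> {x. \<bar>x\<bar> < p ^ 2}"
  then have ax: "\<bar>x\<bar> < p ^ 2" by simp
  show "x \<in> {xseq p i - xseq p j | i j. i < 4 * nat p \<and> j < 4 * nat p}"
  proof (cases "0 \<le> x")
    case True
    then show ?thesis using main_pos[OF assms True] ax by auto
  next
    case False
    then obtain i j where "- x = xseq p i - xseq p j" "i < 4 * nat p" "j < 4 * nat p"
      using main_pos[OF assms, of "- x"] ax by auto
    then have "x = xseq p j - xseq p i" by simp
    then show ?thesis using \<open>i < 4 * nat p\<close> \<open>j < 4 * nat p\<close> by blast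
  qed
qed

end
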